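(* Let $a,b,c,d\ge 0$ be integers with $a+b=c+d=n\ge 1$, and let $\underline x=(a,b)$ and $\underline y=(c,d)$. Then the meander permutation $\sigma_{\underline x,\underline y}$ sends each $i\in\{1,\ldots,n\}$ to the unique element of $\{1,\ldots,n\}$ congruent to $i+a-c$ modulo $n$.
   Context: For compositions $\underline x=(a_1,\ldots,a_m)$, $\underline y=(b_1,\ldots,b_t)$ of $n$ (sequences of nonnegative integers summing to $n$), define bijections $t,b$ of $\{1,\ldots,n\}$ as follows. For each part $a_k$ with $s=a_1+\cdots+a_{k-1}$, set $t(s+j)=s+a_k+1-j$ for $1\le j\le a_k$. Similarly, for each part $b_k$ of $\underline y$ with $s=b_1+\cdots+b_{k-1}$, set $b(s+j)=s+b_k+1-j$ for $1\le j\le b_k$. (These are the top and bottom bijections of the modified meander graph: each vertex is sent to the other endpoint of its top, resp. bottom, arc and fixed if it has none.) The meander permutation is $\sigma_{\underline x,\underline y}=t\circ b$. *)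

theory Defs
  imports "HOL-Number_Theory.Cong"
begin

fun part_rev :: "nat list \<Rightarrow> nat \<Rightarrow> nat \<Rightarrow> nat" where
  "part_rev [] s i = i"
| "part_rev (a # xs) s i =
     (if s < i \<and> i \<le> s + a then s + a + 1 - (i - s) else part_rev xs (s + a) i)"

definition comp_bij :: "nat list \<Rightarrow> nat \<Rightarrow> nat" where
  "comp_bij xs i = part_rev xs 0 i"

definition meander_perm :: "nat list \<Rightarrow> nat list \<Rightarrow> nat \<Rightarrow> nat" where
  "meander_perm xs ys = comp_bij xs \<circ> comp_bij ys"

end

theory Submission
  imports Defs
begin

lemma cb: "comp_bij [a, b] i = (if 0 < i \<and> i \<le> a then a + 1 - i
   else if a < i \<and> i \<le> a + b then a + b + 1 - (i - a) else i)"
  by (simp add: comp_bij_def)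

lemma cg: "int m = x + k * int n \<Longrightarrow> [int m = x] (mod int n)"
  by (simp add: cong_def)

theorem lemma4p8:
  fixes a b c d n :: nat
  assumes "a + b = n" and "c + d = n" and "n \<ge> 1"
  shows "\<forall>i \<in> {1..n}. meander_perm [a, b] [c, d] i \<in> {1..n}
          \<and> [int (meander_perm [a, b] [c, d] i) = int i + int a - int c] (mod int n)"
proof
  fix i assume i: "i \<in> {1..n}"
  show "meander_perm [a, b] [c, d] i \<in> {1..n}
          \<and> [int (meander_perm [a, b] [c, d] i) = int i + int a - int c] (mod int n)"
  proof (cases "i \<le> c")
    case True
    then have j: "comp_bij [c,d] i = c + 1 - i" using i by (simp add: cb)
    show ?thesis
    proof (cases "c + 1 - i \<le> a")
      case True
      then have m: "meander_perm [a, b] [c, d] i = a + 1 - (c + 1 - i)"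
        using i `i \<le> c` by (simp add: meander_perm_def j cb)
      have "int (meander_perm [a, b] [c, d] i) = int i + int a - int c + 0 * int n"
        unfolding m using True i `i \<le> c` by simp
      then have "[int (meander_perm [a, b] [c, d] i) = int i + int a - int c] (mod int n)" by (rule cg)
      moreover have "meander_perm [a, b] [c, d] i \<in> {1..n}" unfolding m using True i `i \<le> c` assms by auto
      ultimately show ?thesis by blast
    next
      case False
      then have m: "meander_perm [a, b] [c, d] i = a + b + 1 - (c + 1 - i - a)"
        using i `i \<le> c` assms by (simp add: meander_perm_def j cb)
      have "int (meander_perm [a, b] [c, d] i) = int i + int a - int c + 1 * int n"
        unfolding m using False i `i \<le> c` assms by simp
      then have "[int (meander_perm [a, b] [c, d] i) = int i + int a - int c] (mod int n)" by (rule cg)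
      moreover have "meander_perm [a, b] [c, d] i \<in> {1..n}" unfolding m using False i `i \<le> c` assms by auto
      ultimately show ?thesis by blast
    qed
  next
    case False
    then have j: "comp_bij [c,d] i = c + d + 1 - (i - c)" using i assms by (simp add: cb)
    show ?thesis
    proof (cases "c + d + 1 - (i - c) \<le> a")
      case True
      then have m: "meander_perm [a, b] [c, d] i = a + 1 - (c + d + 1 - (i - c))"
        using i False assms by (simp add: meander_perm_def j cb)
      have "int (meander_perm [a, b] [c, d] i) = int i + int a - int c + (-1) * int n"
        unfolding m using True i False assms by simp
      then have "[int (meander_perm [a, b] [c, d] i) = int i + int a - int c] (mod int n)" by (rule cg)
      moreover have "meander_perm [a, b] [c, d] i \<in> {1..n}" unfolding m using True i False assms by auto
      ultimately show ?thesis by blast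
    next
      case F2: False
      then have m: "meander_perm [a, b] [c, d] i = a + b + 1 - (c + d + 1 - (i - c) - a)"
        using i False assms by (simp add: meander_perm_def j cb)
      have "int (meander_perm [a, b] [c, d] i) = int i + int a - int c + 0 * int n"
        unfolding m using F2 i False assms by simp
      then have "[int (meander_perm [a, b] [c, d] i) = int i + int a - int c] (mod int n)" by (rule cg)
      moreover have "meander_perm [a, b] [c, d] i \<in> {1..n}" unfolding m using F2 i False assms by auto
      ultimately show ?thesis by blast
    qed
  qed
qed

end
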